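(* Let $N=(V,A)$ be a phylogenetic network on $X$. Then $$l(N)=p(N)=t(N)=(|V|-|X|)-m(\mathcal{G}_N),$$ where $m(\mathcal{G}_N)$ is the size of a maximum matching of $\mathcal{G}_N$.
   Context: $X$ is a nonempty finite set. A phylogenetic network on $X$ is a rooted acyclic digraph with no parallel arcs such that: the unique root has out-degree at least one; $X$ is exactly the set of vertices of out-degree zero (leaves), each of in-degree one; every other vertex either has in-degree one and out-degree at least two (a tree vertex) or in-degree at least two and out-degree one (a reticulation). If $|X|=1$, the network may also consist of the single vertex in $X$. A phylogenetic network $N$ on $X$ is tree-based if it can be obtained from some phylogenetic $X$-tree (phylogenetic network with no reticulations) $T$ by first taking a subdivision of $T$ (new vertices are attachment points) and then adding new arcs $(u,v)$ where either $u$ and $v$ are both attachment points, or $u$ is a non-leaf vertex of $T$ and $v$ is an attachment point; equivalently, $N$ has a rooted spanning tree with the same root as $N$ all of whose leaves lie in $X$. Attaching a new leaf to $N$ means subdividing an arc of $N$ with a new vertex $u$ and adding a new leaf $y$ and the arc $(u,y)$. Define: $l(N)$ is the minimum, over all spanning trees of $N$ rooted at the root of $N$, of the number of leaves of the spanning tree that lie in $V-X$; $p(N)=d(N)-|X|$ where $d(N)$ is the smallest number of vertex-disjoint directed paths of $N$ that partition $V$; $t(N)$ is the minimum number of new leaves that need to be attached (successively) to $N$ so that the resulting network is tree-based. For a digraph $D=(V,A)$, $\mathcal{G}_D$ is the bipartite graph with vertex bipartition $\{V_1,V_2\}$, where $V_1$ and $V_2$ are two disjoint copies of $V$, having an edge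 between the copy of $u$ in $V_1$ and the copy of $v$ in $V_2$ for each arc $(u,v)\in A$. *)

theory Defs
  imports Main
begin

definition indeg :: "('a \<times> 'a) set \<Rightarrow> 'a \<Rightarrow> nat" where
  "indeg A v = card {u. (u, v) \<in> A}"

definition outdeg :: "('a \<times> 'a) set \<Rightarrow> 'a \<Rightarrow> nat" where
  "outdeg A v = card {w. (v, w) \<in> A}"

text \<open>Phylogenetic network on X (arcs form a set, so there are no parallel arcs).\<close>
definition phylo_network :: "'a set \<Rightarrow> ('a \<times> 'a) set \<Rightarrow> 'a set \<Rightarrow> bool" where
  "phylo_network V A X \<longleftrightarrow>
     finite V \<and> A \<subseteq> V \<times> V \<and> acyclic A \<and> X \<noteq> {} \<and> X \<subseteq> V \<and>
     ((\<exists>r. V = {r} \<and> A = {} \<and> X = {r}) \<or>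
      (\<exists>r\<in>V. indeg A r = 0 \<and> outdeg A r \<ge> 1 \<and>
         (\<forall>v\<in>V. v \<noteq> r \<longrightarrow> indeg A v \<ge> 1) \<and>
         X = {v\<in>V. outdeg A v = 0} \<and>
         (\<forall>x\<in>X. indeg A x = 1) \<and>
         (\<forall>v\<in>V - X - {r}. (indeg A v = 1 \<and> outdeg A v \<ge> 2) \<or>
                             (indeg A v \<ge> 2 \<and> outdeg A v = 1))))"

definition root :: "'a set \<Rightarrow> ('a \<times> 'a) set \<Rightarrow> 'a" where
  "root V A = (THE r. r \<in> V \<and> indeg A r = 0)"

definition spanning_tree :: "'a set \<Rightarrow> ('a \<times> 'a) set \<Rightarrow> 'a \<Rightarrow> ('a \<times> 'a) set \<Rightarrow> bool" where
  "spanning_tree V A r T \<longleftrightarrow>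
     T \<subseteq> A \<and> (\<forall>u. (u, r) \<notin> T) \<and>
     (\<forall>v\<in>V. v \<noteq> r \<longrightarrow> card {u. (u, v) \<in> T} = 1) \<and>
     (\<forall>v\<in>V. (r, v) \<in> T\<^sup>*)"

definition tree_leaves :: "'a set \<Rightarrow> ('a \<times> 'a) set \<Rightarrow> 'a set" where
  "tree_leaves V T = {v\<in>V. \<forall>w. (v, w) \<notin> T}"

definition l_num :: "'a set \<Rightarrow> ('a \<times> 'a) set \<Rightarrow> 'a set \<Rightarrow> nat" where
  "l_num V A X = Min {card (tree_leaves V T - X) | T. spanning_tree V A (root V A) T}"

definition dpath :: "('a \<times> 'a) set \<Rightarrow> 'a list \<Rightarrow> bool" where
  "dpath A xs \<longleftrightarrow> xs \<noteq> [] \<and> distinct xs \<and> successively (\<lambda>u v. (u, v) \<in> A) xs"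

definition path_partition :: "'a set \<Rightarrow> ('a \<times> 'a) set \<Rightarrow> 'a list set \<Rightarrow> bool" where
  "path_partition V A P \<longleftrightarrow>
     finite P \<and> (\<forall>p\<in>P. dpath A p) \<and>
     (\<forall>p\<in>P. \<forall>q\<in>P. p \<noteq> q \<longrightarrow> set p \<inter> set q = {}) \<and>
     (\<Union>p\<in>P. set p) = V"

definition d_num :: "'a set \<Rightarrow> ('a \<times> 'a) set \<Rightarrow> nat" where
  "d_num V A = Min {card P | P. path_partition V A P}"

definition p_num :: "'a set \<Rightarrow> ('a \<times> 'a) set \<Rightarrow> 'a set \<Rightarrow> int" where
  "p_num V A X = int (d_num V A) - int (card X)"

text \<open>Tree-based (via the stated equivalent characterisation: a spanning tree
  rooted at the root of N all of whose leaves lie in X).\<close>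
definition tree_based :: "'a set \<Rightarrow> ('a \<times> 'a) set \<Rightarrow> 'a set \<Rightarrow> bool" where
  "tree_based V A X \<longleftrightarrow>
     (\<exists>T. spanning_tree V A (root V A) T \<and> tree_leaves V T \<subseteq> X)"

definition attach_leaf ::
  "('a set \<times> ('a \<times> 'a) set \<times> 'a set) \<Rightarrow> ('a set \<times> ('a \<times> 'a) set \<times> 'a set) \<Rightarrow> bool" where
  "attach_leaf N N' \<longleftrightarrow>
     (\<exists>V A X a b u y. N = (V, A, X) \<and> (a, b) \<in> A \<and> u \<notin> V \<and> y \<notin> V \<and> u \<noteq> y \<and>
        N' = (V \<union> {u, y}, (A - {(a, b)}) \<union> {(a, u), (u, b), (u, y)}, X \<union> {y}))"

text \<open>To have room for new vertices, the network is first embedded into the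
  vertex type 'a + nat (new vertices may then be taken from Inr).\<close>
definition lift_net :: "'a set \<Rightarrow> ('a \<times> 'a) set \<Rightarrow> 'a set \<Rightarrow>
    (('a + nat) set \<times> (('a + nat) \<times> ('a + nat)) set \<times> ('a + nat) set)" where
  "lift_net V A X = (Inl ` V, map_prod Inl Inl ` A, Inl ` X)"

definition t_num :: "'a set \<Rightarrow> ('a \<times> 'a) set \<Rightarrow> 'a set \<Rightarrow> nat" where
  "t_num V A X = (LEAST k. \<exists>V' A' X'. (attach_leaf ^^ k) (lift_net V A X) (V', A', X') \<and>
                                       tree_based V' A' X')"

text \<open>The bipartite graph G_N: vertices (v,False) in V1 and (v,True) in V2;
  one edge {(u,False),(v,True)} per arc (u,v).\<close>
definition bip_vertices :: "'a set \<Rightarrow> ('a \<times> bool) set" where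
  "bip_vertices V = V \<times> UNIV"

definition bip_edges :: "('a \<times> 'a) set \<Rightarrow> ('a \<times> bool) set set" where
  "bip_edges A = {{(u, False), (v, True)} | u v. (u, v) \<in> A}"

definition is_matching :: "'b set set \<Rightarrow> 'b set set \<Rightarrow> bool" where
  "is_matching E M \<longleftrightarrow> M \<subseteq> E \<and> (\<forall>e\<in>M. \<forall>e'\<in>M. e \<noteq> e' \<longrightarrow> e \<inter> e' = {})"

definition max_matching_size :: "'b set set \<Rightarrow> nat" where
  "max_matching_size E = Max {card M | M. is_matching E M}"

end

theory Submission
  imports Defs
begin

definition lf :: "('a \<times> 'a) set \<Rightarrow> ('a \<times> 'a) set \<Rightarrow> bool" where
 "lf A F \<longleftrightarrow> F \<subseteq> A \<and> (\<forall>u v w. (u,v)\<in>F \<longrightarrow> (u,w)\<in>F \<longrightarrow> v=w) \<and>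
     (\<forall>u v w. (u,w)\<in>F \<longrightarrow> (v,w)\<in>F \<longrightarrow> u=v)"

definition mf :: "('a \<times> 'a) set \<Rightarrow> nat" where
 "mf A = Max {card F | F. lf A F}"

lemma lf_empty: "lf A {}" by (simp add: lf_def)

lemma lf_subset: "lf A F \<Longrightarrow> G \<subseteq> F \<Longrightarrow> lf A G"
  unfolding lf_def by blast

lemma mf_le: assumes "finite A" "lf A F" shows "card F \<le> mf A"
proof -
  have "{card F | F. lf A F} \<subseteq> {..card A}"
    using assms(1) by (auto simp: lf_def intro: card_mono)
  hence "finite {card F | F. lf A F}" by (rule finite_subset) simp
  thus ?thesis unfolding mf_def using assms(2) by (auto intro: Max_ge)
qed

lemma mf_ex: assumes "finite A" shows "\<exists>F. lf A F \<and> card F = mf A"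
proof -
  have "{card F | F. lf A F} \<subseteq> {..card A}"
    using assms(1) by (auto simp: lf_def intro: card_mono)
  hence "finite {card F | F. lf A F}" by (rule finite_subset) simp
  moreover have "{card F | F. lf A F} \<noteq> {}" using lf_empty by blast
  ultimately have "mf A \<in> {card F | F. lf A F}" unfolding mf_def by (rule Max_in)
  thus ?thesis by auto
qed

lemma mf_lfI: assumes "finite A" "lf A F" "\<And>G. lf A G \<Longrightarrow> card G \<le> card F"
  shows "mf A = card F"
  using mf_le[OF assms(1,2)] mf_ex[OF assms(1)] assms(3) by (metis le_antisym)

lemma mms_eq: assumes "finite A" shows "max_matching_size (bip_edges A) = mf A"
proof -
  define \<phi> :: "'a \<times> 'a \<Rightarrow> ('a \<times> bool) set" where "\<phi> = (\<lambda>(u,v). {(u,False),(v,True)})"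
  have inj: "inj \<phi>" unfolding \<phi>_def inj_def by auto
  have BE: "bip_edges A = \<phi> ` A" unfolding bip_edges_def \<phi>_def by auto
  have fin: "finite (bip_edges A)" using BE assms by simp
  let ?S = "{card M | M. is_matching (bip_edges A) M}"
  have "?S \<subseteq> {..card (bip_edges A)}"
    using fin by (auto simp: is_matching_def intro: card_mono)
  hence Sfin: "finite ?S" by (rule finite_subset) simp
  have 1: "card M \<le> mf A" if M: "is_matching (bip_edges A) M" for M
  proof -
    define F where "F = {e\<in>A. \<phi> e \<in> M}"
    have MF: "M = \<phi> ` F" using M unfolding F_def is_matching_def BE by auto
    have cM: "card M = card F" unfolding MF by (rule card_image) (rule inj_on_subset[OF inj], simp)
    have "lf A F"
      unfolding lf_def
    proof (intro conjI allI impI)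
      show "F \<subseteq> A" unfolding F_def by auto
    next
      fix u v w assume a: "(u,v)\<in>F" "(u,w)\<in>F"
      hence "\<phi> (u,v) \<in> M" "\<phi> (u,w) \<in> M" unfolding F_def by auto
      moreover have "(u,False) \<in> \<phi> (u,v) \<inter> \<phi> (u,w)" unfolding \<phi>_def by auto
      ultimately have "\<phi> (u,v) = \<phi> (u,w)" using M unfolding is_matching_def by blast
      thus "v = w" using inj unfolding inj_def by blast
    next
      fix u v w assume a: "(u,w)\<in>F" "(v,w)\<in>F"
      hence "\<phi> (u,w) \<in> M" "\<phi> (v,w) \<in> M" unfolding F_def by auto
      moreover have "(w,True) \<in> \<phi> (u,w) \<inter> \<phi> (v,w)" unfolding \<phi>_def by auto
      ultimately have "\<phi> (u,w) = \<phi> (v,w)" using M unfolding is_matching_def by blast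
      thus "u = v" using inj unfolding inj_def by blast
    qed
    thus ?thesis using cM mf_le[OF assms] by simp
  qed
  obtain F where F: "lf A F" "card F = mf A" using mf_ex[OF assms] by blast
  have "is_matching (bip_edges A) (\<phi> ` F)"
    using F(1) unfolding is_matching_def BE lf_def \<phi>_def by fastforce
  moreover have "card (\<phi> ` F) = mf A"
    using F card_image inj_on_subset[OF inj] by (metis subset_UNIV)
  ultimately have 2: "mf A \<in> ?S" by force
  show ?thesis unfolding max_matching_size_def
    using 1 2 Sfin by (intro Max_eqI) auto
qed

fun arcs :: "'a list \<Rightarrow> ('a \<times> 'a) list" where
  "arcs (x#y#zs) = (x,y) # arcs (y#zs)" | "arcs _ = []"

lemma arcs_succ: "successively (\<lambda>u v. (u,v)\<in>A) p \<longleftrightarrow> set (arcs p) \<subseteq> A"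
  by (induction p rule: arcs.induct) auto

lemma arcs_fst: "(u,v) \<in> set (arcs p) \<Longrightarrow> u \<in> set p \<and> v \<in> set p"
  by (induction p rule: arcs.induct) auto

lemma arcs_snd_tl: "(u,v) \<in> set (arcs p) \<Longrightarrow> v \<in> set (tl p)"
  by (induction p rule: arcs.induct) (auto dest: arcs_fst)

lemma arcs_len: "length (arcs p) = length p - 1"
  by (induction p rule: arcs.induct) auto

lemma arcs_distinct: "distinct p \<Longrightarrow> distinct (arcs p)"
  by (induction p rule: arcs.induct) (auto dest: arcs_fst)

lemma arcs_tail_uniq: "distinct p \<Longrightarrow> (u,v) \<in> set (arcs p) \<Longrightarrow> (u,w) \<in> set (arcs p) \<Longrightarrow> v = w"
  by (induction p rule: arcs.induct) (auto dest: arcs_fst)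

lemma arcs_head_uniq: "distinct p \<Longrightarrow> (u,w) \<in> set (arcs p) \<Longrightarrow> (v,w) \<in> set (arcs p) \<Longrightarrow> u = v"
  by (induction p rule: arcs.induct) (auto dest: arcs_snd_tl)

lemma arcs_not_last: "x \<in> set p \<Longrightarrow> x \<noteq> last p \<Longrightarrow> \<exists>y. (x,y) \<in> set (arcs p)"
  by (induction p rule: arcs.induct) auto

lemma arcs_not_hd: "x \<in> set p \<Longrightarrow> x \<noteq> hd p \<Longrightarrow> \<exists>y. (y,x) \<in> set (arcs p)"
proof (induction p rule: arcs.induct)
  case (1 x y zs)
  then show ?case by (cases "x = y") auto
qed auto

lemma arcs_append: "p \<noteq> [] \<Longrightarrow> q \<noteq> [] \<Longrightarrow>
   set (arcs (p @ q)) = set (arcs p) \<union> set (arcs q) \<union> {(last p, hd q)}"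
proof (induction p)
  case (Cons x p)
  then show ?case by (cases p; cases q) auto
qed auto

lemma arcs_rtrancl: "set (arcs p) \<subseteq> A \<Longrightarrow> p \<noteq> [] \<Longrightarrow> (hd p, last p) \<in> A\<^sup>*"
proof (induction p rule: arcs.induct)
  case (1 x y zs)
  then show ?case by (auto intro: converse_rtrancl_into_rtrancl)
qed auto

lemma pp_to_lf:
  assumes fin: "finite V" and P: "path_partition V A P"
  shows "\<exists>F. lf A F \<and> card F + card P = card V"
proof -
  define F where "F = (\<Union>p\<in>P. set (arcs p))"
  have finP: "finite P" and dp: "\<And>p. p \<in> P \<Longrightarrow> dpath A p"
    and dis: "\<And>p q. p \<in> P \<Longrightarrow> q \<in> P \<Longrightarrow> p \<noteq> q \<Longrightarrow> set p \<inter> set q = {}"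
    and un: "(\<Union>p\<in>P. set p) = V"
    using P unfolding path_partition_def by auto
  have lf: "lf A F"
    unfolding lf_def
  proof (intro conjI allI impI)
    show "F \<subseteq> A" unfolding F_def using dp by (auto simp: dpath_def arcs_succ)
  next
    fix u v w assume "(u,v) \<in> F" "(u,w) \<in> F"
    then obtain p q where pq: "p \<in> P" "q \<in> P" "(u,v) \<in> set (arcs p)" "(u,w) \<in> set (arcs q)"
      unfolding F_def by auto
    have "u \<in> set p" "u \<in> set q" using arcs_fst pq(3,4) by metis+
    hence "p = q" using dis[of p q] pq(1,2) by blast
    thus "v = w" using pq dp[of p] arcs_tail_uniq unfolding dpath_def by metis
  next
    fix u v w assume "(u,w) \<in> F" "(v,w) \<in> F"
    then obtain p q where pq: "p \<in> P" "q \<in> P" "(u,w) \<in> set (arcs p)" "(v,w) \<in> set (arcs q)"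
      unfolding F_def by auto
    have "w \<in> set p" "w \<in> set q" using arcs_fst pq(3,4) by metis+
    hence "p = q" using dis[of p q] pq(1,2) by blast
    thus "u = v" using pq dp[of p] arcs_head_uniq unfolding dpath_def by metis
  qed
  have cV: "card V = (\<Sum>p\<in>P. length p)"
  proof -
    have "card V = (\<Sum>p\<in>P. card (set p))" unfolding un[symmetric]
      using finP dis by (intro card_UN_disjoint) auto
    also have "\<dots> = (\<Sum>p\<in>P. length p)"
      using dp by (intro sum.cong) (auto simp: dpath_def distinct_card)
    finally show ?thesis .
  qed
  have cF: "card F = (\<Sum>p\<in>P. length p - 1)"
  proof -
    have dis2: "set (arcs p) \<inter> set (arcs q) = {}" if "p \<in> P" "q \<in> P" "p \<noteq> q" for p q
    proof (rule ccontr)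
      assume "set (arcs p) \<inter> set (arcs q) \<noteq> {}"
      then obtain u v where "(u,v) \<in> set (arcs p)" "(u,v) \<in> set (arcs q)" by auto
      hence "u \<in> set p" "u \<in> set q" using arcs_fst by metis+
      thus False using dis[OF that] by blast
    qed
    have "card F = (\<Sum>p\<in>P. card (set (arcs p)))" unfolding F_def
      using finP dis2 by (intro card_UN_disjoint) auto
    also have "\<dots> = (\<Sum>p\<in>P. length p - 1)"
      using dp by (intro sum.cong) (auto simp: dpath_def distinct_card arcs_distinct arcs_len)
    finally show ?thesis .
  qed
  have "(\<Sum>p\<in>P. length p) = (\<Sum>p\<in>P. (length p - 1) + 1)"
    using dp by (intro sum.cong) (auto simp: dpath_def)
  also have "\<dots> = card F + card P" unfolding cF sum.distrib by simp
  finally show ?thesis using lf cV by auto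
qed

lemma lf_to_pp:
  assumes fin: "finite V" and AV: "A \<subseteq> V \<times> V" and acyc: "acyclic A"
  shows "finite F \<Longrightarrow> lf A F \<Longrightarrow>
     \<exists>P. path_partition V A P \<and> card P + card F = card V \<and> (\<Union>p\<in>P. set (arcs p)) = F"
proof (induction F rule: finite_induct)
  case empty
  define P where "P = (\<lambda>v. [v]) ` V"
  have "path_partition V A P" unfolding path_partition_def P_def dpath_def using fin by auto
  moreover have "card P = card V" unfolding P_def by (rule card_image) (auto simp: inj_on_def)
  moreover have "(\<Union>p\<in>P. set (arcs p)) = {}" unfolding P_def by auto
  ultimately show ?case by auto
next
  case (insert e F)
  obtain a b where e: "e = (a,b)" by fastforce
  have lfF: "lf A F" using insert.prems lf_subset by blast
  obtain P where P: "path_partition V A P" "card P + card F = card V" "(\<Union>p\<in>P. set (arcs p)) = F"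
    using insert.IH[OF lfF] by blast
  have finP: "finite P" and dp: "\<And>p. p \<in> P \<Longrightarrow> dpath A p"
    and dis: "\<And>p q. p \<in> P \<Longrightarrow> q \<in> P \<Longrightarrow> p \<noteq> q \<Longrightarrow> set p \<inter> set q = {}"
    and un: "(\<Union>p\<in>P. set p) = V"
    using P(1) unfolding path_partition_def by auto
  have abA: "(a,b) \<in> A" using insert.prems e unfolding lf_def by auto
  hence abV: "a \<in> V" "b \<in> V" using AV by auto
  obtain p where p: "p \<in> P" "a \<in> set p" using abV un by blast
  obtain q where q: "q \<in> P" "b \<in> set q" using abV un by blast
  have lfI: "lf A (insert (a,b) F)" using insert.prems e by simp
  have ap: "a = last p"
  proof (rule ccontr)
    assume "a \<noteq> last p"
    then obtain y where "(a,y) \<in> set (arcs p)" using arcs_not_last p by metis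
    hence "(a,y) \<in> F" using P(3) p by blast
    hence "y = b" using lfI unfolding lf_def by blast
    thus False using \<open>(a,y) \<in> F\<close> insert.hyps e by simp
  qed
  have bq: "b = hd q"
  proof (rule ccontr)
    assume "b \<noteq> hd q"
    then obtain y where "(y,b) \<in> set (arcs q)" using arcs_not_hd q by metis
    hence "(y,b) \<in> F" using P(3) q by blast
    hence "y = a" using lfI unfolding lf_def by blast
    thus False using \<open>(y,b) \<in> F\<close> insert.hyps e by simp
  qed
  have pne: "p \<noteq> []" "q \<noteq> []" using p q by auto
  have "p \<noteq> q"
  proof
    assume "p = q"
    have "set (arcs p) \<subseteq> A" using dp[OF p(1)] by (simp add: dpath_def arcs_succ)
    hence "(b, a) \<in> A\<^sup>*" using arcs_rtrancl[of p A] pne ap bq \<open>p = q\<close> by simp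
    hence "(a,a) \<in> A\<^sup>+" using abA by (meson rtrancl_into_trancl2)
    thus False using acyc unfolding acyclic_def by blast
  qed
  hence dpq: "set p \<inter> set q = {}" using dis p q by blast
  define P' where "P' = insert (p @ q) (P - {p,q})"
  have notin: "p @ q \<notin> P - {p,q}"
  proof
    assume "p @ q \<in> P - {p,q}"
    hence "set (p @ q) \<inter> set p = {}" using dis p by blast
    thus False using pne by (cases p) auto
  qed
  have sub: "{p,q} \<subseteq> P" using p q by simp
  have c2': "card {p,q} = 2" using \<open>p \<noteq> q\<close> by simp
  have c2: "card P \<ge> 2" using card_mono[OF finP sub] c2' by simp
  have cP: "card P' = card P - 1"
  proof -
    have "card (P - {p,q}) = card P - 2"
      using card_Diff_subset[of "{p,q}" P] sub c2' by simp
    with c2 show ?thesis unfolding P'_def using notin finP by simp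
  qed
  have dp1: "dpath A p" "dpath A q" using dp p q by auto
  have dpath_pq: "dpath A (p @ q)"
    unfolding dpath_def
  proof (intro conjI)
    show "p @ q \<noteq> []" using pne by simp
    show "distinct (p @ q)" using dp1 dpq by (simp add: dpath_def)
    have "(last p, hd q) \<in> A" using ap bq abA by simp
    thus "successively (\<lambda>u v. (u, v) \<in> A) (p @ q)"
      using dp1 unfolding dpath_def successively_append_iff by blast
  qed
  have "path_partition V A P'"
    unfolding path_partition_def
  proof (intro conjI ballI impI)
    show "finite P'" unfolding P'_def using finP by simp
  next
    fix r assume "r \<in> P'" thus "dpath A r" unfolding P'_def using dp dpath_pq by auto
  next
    fix r s assume rs: "r \<in> P'" "s \<in> P'" "r \<noteq> s"
    show "set r \<inter> set s = {}"
    proof (cases "r = p @ q")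
      case True
      hence "s \<in> P - {p,q}" using rs unfolding P'_def by auto
      thus ?thesis using True dis p q by fastforce
    next
      case False
      hence r': "r \<in> P - {p,q}" using rs unfolding P'_def by auto
      show ?thesis
      proof (cases "s = p @ q")
        case True
        thus ?thesis using r' dis p q by fastforce
      next
        case False
        hence "s \<in> P - {p,q}" using rs unfolding P'_def by auto
        thus ?thesis using r' dis rs(3) by blast
      qed
    qed
  next
    show "(\<Union>r\<in>P'. set r) = V" unfolding P'_def un[symmetric] using p q by auto
  qed
  moreover have "card P' + card (insert e F) = card V"
    using cP P(2) insert.hyps c2 by simp
  moreover have "(\<Union>r\<in>P'. set (arcs r)) = insert e F"
    unfolding P'_def P(3)[symmetric] e using arcs_append[OF pne] ap bq p q by auto
  ultimately show ?case by blast
qed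

lemma d_num_eq:
  assumes fin: "finite V" and AV: "A \<subseteq> V \<times> V" and acyc: "acyclic A"
  shows "d_num V A + mf A = card V"
proof -
  have finA: "finite A" using fin AV finite_subset by blast
  obtain F where F: "lf A F" "card F = mf A" using mf_ex[OF finA] by blast
  have "finite F" using F(1) finA unfolding lf_def using finite_subset by blast
  then obtain P where P: "path_partition V A P" "card P + mf A = card V"
    using lf_to_pp[OF assms] F by metis
  let ?S = "{card P | P. path_partition V A P}"
  have lo: "card V - mf A \<le> n" if n: "n \<in> ?S" for n
  proof -
    obtain Q where Q: "path_partition V A Q" "n = card Q" using n by blast
    obtain G where G: "lf A G" "card G + card Q = card V" using pp_to_lf[OF fin Q(1)] by blast
    thus ?thesis using mf_le[OF finA G(1)] Q(2) by linarith
  qed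
  have "?S \<subseteq> {..card V}" using pp_to_lf[OF fin] by fastforce
  hence "finite ?S" using finite_subset by blast
  moreover have "card V - mf A \<in> ?S" using P by force
  ultimately have "Min ?S = card V - mf A" using lo by (intro Min_eqI) auto
  thus ?thesis unfolding d_num_def using P by linarith
qed

definition G :: "'a set \<Rightarrow> ('a \<times> 'a) set \<Rightarrow> 'a set \<Rightarrow> 'a \<Rightarrow> bool" where
 "G V A X r \<longleftrightarrow> finite V \<and> A \<subseteq> V \<times> V \<and> r \<in> V \<and> (\<forall>u. (u,r) \<notin> A) \<and>
    (\<forall>v\<in>V. v \<noteq> r \<longrightarrow> (\<exists>u. (u,v)\<in>A)) \<and> X = {v\<in>V. \<forall>w. (v,w) \<notin> A}"

lemma G_root: assumes "G V A X r" shows "root V A = r"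
proof -
  have fV: "finite V" and AV: "A \<subseteq> V \<times> V" and rV: "r \<in> V" and noR: "\<forall>u. (u,r) \<notin> A"
    and par: "\<forall>v\<in>V. v \<noteq> r \<longrightarrow> (\<exists>u. (u,v)\<in>A)"
    using assms unfolding G_def by auto
  have fin: "finite A" using finite_subset[OF AV] fV by simp
  have r: "r \<in> V \<and> indeg A r = 0" using rV noR unfolding indeg_def by auto
  have uniq: "v = r" if v: "v \<in> V \<and> indeg A v = 0" for v
  proof (rule ccontr)
    assume "v \<noteq> r"
    then obtain u where u: "(u,v) \<in> A" using par v by blast
    have "{u. (u,v) \<in> A} \<subseteq> fst ` A" by force
    hence "finite {u. (u,v) \<in> A}" using fin finite_subset by (metis finite_imageI)
    hence "card {u. (u,v) \<in> A} \<noteq> 0" using u by auto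
    thus False using v unfolding indeg_def by simp
  qed
  show ?thesis unfolding root_def by (rule the_equality[where P="\<lambda>r. r \<in> V \<and> indeg A r = 0", OF r uniq])
qed

lemma X_leaves: assumes "G V A X r" "T \<subseteq> A" shows "X \<subseteq> tree_leaves V T"
  using assms unfolding G_def tree_leaves_def by blast

lemma L1:
  assumes fin: "finite V" and AV: "A \<subseteq> V \<times> V" and T: "spanning_tree V A r T"
  shows "card V \<le> card (tree_leaves V T) + mf A"
proof -
  have finA: "finite A" using finite_subset[OF AV] fin by simp
  have TA: "T \<subseteq> A" and noR: "\<forall>u. (u,r) \<notin> T"
    and one: "\<And>v. v \<in> V \<Longrightarrow> v \<noteq> r \<Longrightarrow> card {u. (u,v) \<in> T} = 1"
    using T unfolding spanning_tree_def by auto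
  define NL where "NL = {v\<in>V. \<exists>w. (v,w)\<in>T}"
  define c where "c v = (SOME w. (v,w) \<in> T)" for v
  have cT: "(v, c v) \<in> T" if "v \<in> NL" for v
    using that unfolding NL_def c_def by (auto intro: someI_ex)
  define F where "F = (\<lambda>v. (v, c v)) ` NL"
  have cF: "card F = card NL" unfolding F_def by (rule card_image) (auto simp: inj_on_def)
  have FT: "F \<subseteq> T" unfolding F_def using cT by auto
  have "lf A F"
    unfolding lf_def
  proof (intro conjI allI impI)
    show "F \<subseteq> A" using FT TA by blast
  next
    fix u v w assume "(u,v) \<in> F" "(u,w) \<in> F" thus "v = w" unfolding F_def by auto
  next
    fix u v w assume a: "(u,w) \<in> F" "(v,w) \<in> F"
    hence t: "(u,w) \<in> T" "(v,w) \<in> T" using FT by auto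
    hence "w \<in> V" "w \<noteq> r" using TA AV noR by auto
    hence "card {z. (z,w) \<in> T} = 1" using one by blast
    then obtain z0 where z0: "{z. (z,w) \<in> T} = {z0}" by (rule card_1_singletonE)
    have "u \<in> {z. (z,w) \<in> T}" "v \<in> {z. (z,w) \<in> T}" using t by auto
    thus "u = v" unfolding z0 by blast
  qed
  hence "card F \<le> mf A" using mf_le[OF finA] by blast
  moreover have "card V = card NL + card (tree_leaves V T)"
  proof -
    have "V = NL \<union> tree_leaves V T" "NL \<inter> tree_leaves V T = {}"
      unfolding NL_def tree_leaves_def by auto
    thus ?thesis using fin by (metis card_Un_disjoint finite_Un)
  qed
  ultimately show ?thesis using cF by linarith
qed

lemma L2:
  assumes GV: "G V A X r" and acyc: "acyclic A"
  shows "\<exists>T. spanning_tree V A r T \<and> card (tree_leaves V T - X) + card X + mf A \<le> card V"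
proof -
  have fin: "finite V" and AV: "A \<subseteq> V \<times> V" and rV: "r \<in> V" and noR: "\<forall>u. (u,r) \<notin> A"
    and par: "\<And>v. v \<in> V \<Longrightarrow> v \<noteq> r \<Longrightarrow> \<exists>u. (u,v)\<in>A"
    and Xd: "X = {v\<in>V. \<forall>w. (v,w) \<notin> A}"
    using GV unfolding G_def by auto
  have finA: "finite A" using finite_subset[OF AV] fin by simp
  obtain F where F: "lf A F" "card F = mf A" using mf_ex[OF finA] by blast
  have FA: "F \<subseteq> A" and tu: "\<And>u v w. (u,v)\<in>F \<Longrightarrow> (u,w)\<in>F \<Longrightarrow> v=w"
    and hu: "\<And>u v w. (u,w)\<in>F \<Longrightarrow> (v,w)\<in>F \<Longrightarrow> u=v"
    using F(1) unfolding lf_def by blast+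
  define pa where "pa v = (SOME u. (u,v) \<in> A)" for v
  have paA: "(pa v, v) \<in> A" if "v \<in> V" "v \<noteq> r" for v
    using par[OF that] unfolding pa_def by (auto intro: someI_ex)
  define T where "T = F \<union> {(pa v, v) | v. v \<in> V \<and> v \<noteq> r \<and> (\<forall>u. (u,v) \<notin> F)}"
  have TA: "T \<subseteq> A" unfolding T_def using FA paA by blast
  have noRT: "\<forall>u. (u,r) \<notin> T" using TA noR by blast
  have parT: "\<exists>u. (u,v) \<in> T" if "v \<in> V" "v \<noteq> r" for v
    unfolding T_def using that by blast
  have one: "card {u. (u,v) \<in> T} = 1" if "v \<in> V" "v \<noteq> r" for v
  proof (cases "\<exists>u. (u,v) \<in> F")
    case True
    then obtain u0 where u0: "(u0,v) \<in> F" by blast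
    have "{u. (u,v) \<in> T} = {u0}" unfolding T_def using u0 hu by blast
    thus ?thesis by simp
  next
    case False
    have "{u. (u,v) \<in> T} = {pa v}" unfolding T_def using False that by blast
    thus ?thesis by simp
  qed
  have wfA: "wf A" using finA acyc by (simp add: finite_acyclic_wf)
  have reach: "\<forall>v. v \<in> V \<longrightarrow> (r,v) \<in> T\<^sup>*"
  proof (intro allI)
    fix v show "v \<in> V \<longrightarrow> (r,v) \<in> T\<^sup>*"
    proof (induct v rule: wf_induct[OF wfA])
      case (1 v)
      show ?case
      proof
        assume vV: "v \<in> V"
        show "(r,v) \<in> T\<^sup>*"
        proof (cases "v = r")
          case False
          then obtain u where u: "(u,v) \<in> T" using parT vV by blast
          hence "(u,v) \<in> A" using TA by blast
          hence "(r,u) \<in> T\<^sup>*" using 1 AV by blast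
          thus ?thesis using u by (rule rtrancl_into_rtrancl)
        qed simp
      qed
    qed
  qed
  have ST: "spanning_tree V A r T"
    unfolding spanning_tree_def using TA noRT one reach by blast
  define Lf where "Lf = {v\<in>V. \<forall>w. (v,w) \<notin> F}"
  have LL: "tree_leaves V T \<subseteq> Lf" unfolding tree_leaves_def Lf_def T_def by blast
  have "V = Lf \<union> fst ` F" "Lf \<inter> fst ` F = {}" unfolding Lf_def using FA AV by force+
  moreover have "card (fst ` F) = card F" using tu by (intro card_image) (auto simp: inj_on_def)
  ultimately have cLf: "card Lf + card F = card V" using fin
    by (metis card_Un_disjoint finite_Un)
  have XL: "X \<subseteq> tree_leaves V T" using X_leaves[OF GV TA] .
  have finL: "finite (tree_leaves V T)" using fin unfolding tree_leaves_def by simp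
  have "card (tree_leaves V T - X) + card X = card (tree_leaves V T)"
    using XL finL by (metis card_Diff_subset finite_subset le_add_diff_inverse2 card_mono)
  moreover have "card (tree_leaves V T) \<le> card Lf"
    using LL fin unfolding Lf_def by (intro card_mono) auto
  ultimately show ?thesis using ST cLf F(2) by (intro exI[of _ T]) linarith
qed

lemma l_num_eq:
  assumes GV: "G V A X r" and acyc: "acyclic A"
  shows "l_num V A X + card X + mf A = card V"
proof -
  have fin: "finite V" and AV: "A \<subseteq> V \<times> V" using GV unfolding G_def by auto
  have rt: "root V A = r" using G_root[OF GV] .
  let ?S = "{card (tree_leaves V T - X) | T. spanning_tree V A r T}"
  obtain T0 where T0: "spanning_tree V A r T0" "card (tree_leaves V T0 - X) + card X + mf A \<le> card V"
    using L2[OF GV acyc] by blast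
  have lo: "card V \<le> n + card X + mf A" if n: "n \<in> ?S" for n
  proof -
    obtain T where T: "spanning_tree V A r T" "n = card (tree_leaves V T - X)" using n by blast
    have TA: "T \<subseteq> A" using T unfolding spanning_tree_def by blast
    have XL: "X \<subseteq> tree_leaves V T" using X_leaves[OF GV TA] .
    have finL: "finite (tree_leaves V T)" using fin unfolding tree_leaves_def by simp
    have "card (tree_leaves V T - X) + card X = card (tree_leaves V T)"
      using card_Diff_subset[OF finite_subset[OF XL finL] XL] card_mono[OF finL XL] by linarith
    thus ?thesis using L1[OF fin AV T(1)] T(2) by linarith
  qed
  have "?S \<subseteq> {..card V}"
  proof
    fix n assume "n \<in> ?S"
    then obtain T where "n = card (tree_leaves V T - X)" by blast
    moreover have "tree_leaves V T - X \<subseteq> V" unfolding tree_leaves_def by auto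
    ultimately show "n \<in> {..card V}" using card_mono[OF fin] by simp
  qed
  hence "finite ?S" using finite_subset by auto
  moreover have mem: "card (tree_leaves V T0 - X) \<in> ?S" using T0 by blast
  moreover have "card (tree_leaves V T0 - X) \<le> y" if y: "y \<in> ?S" for y
    using lo[OF y] T0(2) by linarith
  ultimately have "Min ?S = card (tree_leaves V T0 - X)"
    by (intro Min_eqI) auto
  moreover have "card V \<le> card (tree_leaves V T0 - X) + card X + mf A" using lo[OF mem] .
  ultimately show ?thesis unfolding l_num_def rt using T0(2) by linarith
qed

definition J :: "'a set \<Rightarrow> ('a \<times> 'a) set \<Rightarrow> 'a set \<Rightarrow> bool" where
  "J V A X \<longleftrightarrow> finite V \<and> A \<subseteq> V \<times> V \<and> X \<subseteq> V"

lemma lf_mono: "lf A' F \<Longrightarrow> H \<subseteq> F \<Longrightarrow> H \<subseteq> A \<Longrightarrow> lf A H"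
  unfolding lf_def by blast

lemma card2: "card {p, q} \<le> 2"
  by (cases "p = q") auto

definition fval :: "'a set \<times> ('a \<times> 'a) set \<times> 'a set \<Rightarrow> int" where
  "fval N = (case N of (V,A,X) \<Rightarrow> int (card V) - int (card X) - int (mf A))"

lemma attach_J:
  assumes att: "attach_leaf (V,A,X) (V',A',X')" and j: "J V A X"
  shows "J V' A' X' \<and> fval (V,A,X) \<le> fval (V',A',X') + 1"
proof -
  obtain a b u y where ab: "(a,b) \<in> A" and u: "u \<notin> V" and y: "y \<notin> V" and uy: "u \<noteq> y"
    and V': "V' = V \<union> {u,y}" and A': "A' = (A - {(a,b)}) \<union> {(a,u),(u,b),(u,y)}"
    and X': "X' = X \<union> {y}"
    using att unfolding attach_leaf_def by blast
  have fin: "finite V" and AV: "A \<subseteq> V \<times> V" and XV: "X \<subseteq> V" using j unfolding J_def by auto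
  have abV: "a \<in> V" "b \<in> V" using ab AV by auto
  have j': "J V' A' X'" unfolding J_def V' A' X' using fin AV XV abV by auto
  have finA: "finite A" using finite_subset[OF AV] fin by simp
  have finA': "finite A'" unfolding A' using finA by simp
  obtain F' where F': "lf A' F'" "card F' = mf A'" using mf_ex[OF finA'] by blast
  define S where "S = {(a,u),(u,b),(u,y)}"
  have "F' \<subseteq> A'" using F'(1) unfolding lf_def by blast
  hence "F' - S \<subseteq> A" unfolding A' S_def by blast
  hence "lf A (F' - S)" using lf_mono[OF F'(1)] by blast
  hence c1: "card (F' - S) \<le> mf A" using mf_le[OF finA] by blast
  have c2: "card (F' \<inter> S) \<le> 2"
  proof -
    have "b \<noteq> y" using abV y by auto
    hence "\<not> ((u,b) \<in> F' \<and> (u,y) \<in> F')" using F'(1) unfolding lf_def by blast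
    hence "F' \<inter> S \<subseteq> {(a,u),(u,b)} \<or> F' \<inter> S \<subseteq> {(a,u),(u,y)}" unfolding S_def by blast
    thus ?thesis
    proof
      assume "F' \<inter> S \<subseteq> {(a,u),(u,b)}"
      hence "card (F' \<inter> S) \<le> card {(a,u),(u,b)}" by (rule card_mono[rotated]) simp
      thus ?thesis using card2[of "(a,u)" "(u,b)"] by linarith
    next
      assume "F' \<inter> S \<subseteq> {(a,u),(u,y)}"
      hence "card (F' \<inter> S) \<le> card {(a,u),(u,y)}" by (rule card_mono[rotated]) simp
      thus ?thesis using card2[of "(a,u)" "(u,y)"] by linarith
    qed
  qed
  have "F' = (F' - S) \<union> (F' \<inter> S)" by blast
  hence "card F' \<le> card (F' - S) + card (F' \<inter> S)" by (metis card_Un_le)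
  hence m: "mf A' \<le> mf A + 2" using c1 c2 F'(2) by linarith
  have cV: "card V' = card V + 2" unfolding V' using fin u y uy by simp
  have cX: "card X' = card X + 1" proof -
    have "y \<notin> X" using y XV by blast
    thus ?thesis unfolding X' using finite_subset[OF XV fin] by simp
  qed
  show ?thesis using j' m cV cX unfolding fval_def by simp
qed

lemma attach_pow:
  "(attach_leaf ^^ k) N N' \<Longrightarrow> (case N of (V,A,X) \<Rightarrow> J V A X) \<Longrightarrow>
     (case N' of (V,A,X) \<Rightarrow> J V A X) \<and> fval N \<le> fval N' + int k"
proof (induction k arbitrary: N')
  case 0
  thus ?case by simp
next
  case (Suc k)
  from Suc.prems(1) obtain N1 where N1: "(attach_leaf ^^ k) N N1" "attach_leaf N1 N'"
    by (rule relpowp_Suc_E)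
  have IH: "(case N1 of (V,A,X) \<Rightarrow> J V A X) \<and> fval N \<le> fval N1 + int k"
    using Suc.IH[OF N1(1) Suc.prems(2)] .
  obtain V1 A1 X1 where n1: "N1 = (V1,A1,X1)" by (cases N1)
  obtain V2 A2 X2 where n2: "N' = (V2,A2,X2)" by (cases N')
  have "J V2 A2 X2 \<and> fval N1 \<le> fval N' + 1"
    using attach_J[of V1 A1 X1 V2 A2 X2] N1(2) IH unfolding n1 n2 by simp
  thus ?case using IH n2 by simp
qed

lemma tb_bound:
  assumes j: "J V A X" and tb: "tree_based V A X"
  shows "card V \<le> card X + mf A"
proof -
  have fin: "finite V" and AV: "A \<subseteq> V \<times> V" and XV: "X \<subseteq> V" using j unfolding J_def by auto
  obtain T where T: "spanning_tree V A (root V A) T" "tree_leaves V T \<subseteq> X"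
    using tb unfolding tree_based_def by blast
  have "card (tree_leaves V T) \<le> card X" using card_mono[OF finite_subset[OF XV fin] T(2)] .
  thus ?thesis using L1[OF fin AV T(1)] by linarith
qed

lemma upper:
  fixes V :: "'b set"
  assumes inf: "infinite (UNIV :: 'b set)"
  shows "G V A X r \<Longrightarrow> spanning_tree V A r T \<Longrightarrow> card (tree_leaves V T - X) = k \<Longrightarrow>
     \<exists>V' A' X'. (attach_leaf ^^ k) (V,A,X) (V',A',X') \<and> tree_based V' A' X'"
proof (induction k arbitrary: V A X T)
  case 0
  have fin: "finite V" using 0(1) unfolding G_def by blast
  have "tree_leaves V T - X = {}" using 0(3) fin unfolding tree_leaves_def by simp
  hence "tree_leaves V T \<subseteq> X" by blast
  hence "tree_based V A X" unfolding tree_based_def G_root[OF 0(1)] using 0(2) by blast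
  thus ?case by auto
next
  case (Suc k)
  have fin: "finite V" and AV: "A \<subseteq> V \<times> V" and rV: "r \<in> V" and noR: "\<forall>u. (u,r) \<notin> A"
    and par: "\<forall>v\<in>V. v \<noteq> r \<longrightarrow> (\<exists>u. (u,v)\<in>A)"
    and Xd: "X = {v\<in>V. \<forall>w. (v,w) \<notin> A}"
    using Suc.prems(1) unfolding G_def by auto
  have TA: "T \<subseteq> A" and noRT: "\<forall>u. (u,r) \<notin> T"
    and one: "\<forall>v\<in>V. v \<noteq> r \<longrightarrow> card {u. (u,v) \<in> T} = 1"
    and reach: "\<forall>v\<in>V. (r,v) \<in> T\<^sup>*"
    using Suc.prems(2) unfolding spanning_tree_def by auto
  have "tree_leaves V T - X \<noteq> {}" using Suc.prems(3) by (metis card.empty Zero_not_Suc)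
  then obtain v where v: "v \<in> tree_leaves V T" "v \<notin> X" by blast
  have vV: "v \<in> V" and vleaf: "\<forall>w. (v,w) \<notin> T" using v(1) unfolding tree_leaves_def by auto
  obtain w where w: "(v,w) \<in> A" using v(2) vV Xd by blast
  have wV: "w \<in> V" using w AV by auto
  obtain u where u: "u \<notin> V" using ex_new_if_finite[OF inf fin] by blast
  obtain y where y: "y \<notin> insert u V" using ex_new_if_finite[OF inf] fin by blast
  have yV: "y \<notin> V" and uy: "u \<noteq> y" using y by auto
  define V' where "V' = V \<union> {u,y}"
  define A' where "A' = (A - {(v,w)}) \<union> {(v,u),(u,w),(u,y)}"
  define X' where "X' = X \<union> {y}"
  define T' where "T' = insert (v,u) (insert (u,y) T)"
  have att: "attach_leaf (V,A,X) (V',A',X')"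
    unfolding attach_leaf_def V'_def A'_def X'_def using w u yV uy by blast
  have wr: "w \<noteq> r" using w noR by blast
  have G': "G V' A' X' r"
    unfolding G_def
  proof (intro conjI)
    show "finite V'" unfolding V'_def using fin by simp
    show "A' \<subseteq> V' \<times> V'" unfolding V'_def A'_def using AV vV wV by auto
    show "r \<in> V'" unfolding V'_def using rV by simp
    show "\<forall>z. (z,r) \<notin> A'" unfolding A'_def using noR wr u yV rV by auto
    show "\<forall>x\<in>V'. x \<noteq> r \<longrightarrow> (\<exists>z. (z,x)\<in>A')"
    proof (intro ballI impI)
      fix x assume x: "x \<in> V'" "x \<noteq> r"
      show "\<exists>z. (z,x)\<in>A'"
      proof (cases "x = u \<or> x = y \<or> x = w")
        case True thus ?thesis unfolding A'_def by blast
      next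
        case False
        hence "x \<in> V" using x unfolding V'_def by blast
        then obtain z where "(z,x) \<in> A" using par x(2) by blast
        hence "(z,x) \<in> A'" unfolding A'_def using False by blast
        thus ?thesis by blast
      qed
    qed
    show "X' = {x\<in>V'. \<forall>z. (x,z) \<notin> A'}"
    proof
      show "X' \<subseteq> {x\<in>V'. \<forall>z. (x,z) \<notin> A'}"
      proof
        fix x assume "x \<in> X'"
        moreover have "y \<noteq> v" using yV vV by blast
        moreover have "\<forall>z. (y,z) \<notin> A" using yV AV by blast
        ultimately show "x \<in> {x\<in>V'. \<forall>z. (x,z) \<notin> A'}"
          unfolding X'_def V'_def A'_def using Xd v(2) u uy by auto
      qed
    next
      show "{x\<in>V'. \<forall>z. (x,z) \<notin> A'} \<subseteq> X'"
      proof
        fix x assume x: "x \<in> {x\<in>V'. \<forall>z. (x,z) \<notin> A'}"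
        hence "x \<noteq> u" "x \<noteq> v" unfolding A'_def by auto
        hence "x \<in> V \<or> x = y" "\<forall>z. (x,z) \<notin> A" using x unfolding V'_def A'_def by auto
        thus "x \<in> X'" unfolding X'_def Xd by blast
      qed
    qed
  qed
  have vwT: "(v,w) \<notin> T" using vleaf by blast
  have TV: "T \<subseteq> V \<times> V" using TA AV by blast
  have ST': "spanning_tree V' A' r T'"
    unfolding spanning_tree_def
  proof (intro conjI ballI impI allI)
    show "T' \<subseteq> A'" unfolding T'_def A'_def using TA vwT by blast
    fix z show "(z,r) \<notin> T'" unfolding T'_def using noRT rV u yV by auto
  next
    fix x assume x: "x \<in> V'" "x \<noteq> r"
    show "card {z. (z,x) \<in> T'} = 1"
    proof (cases "x \<in> V")
      case True
      hence "{z. (z,x) \<in> T'} = {z. (z,x) \<in> T}" unfolding T'_def using u yV by auto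
      thus ?thesis using one True x(2) by simp
    next
      case False
      hence "x = u \<or> x = y" using x unfolding V'_def by blast
      thus ?thesis
      proof
        assume xu: "x = u"
        have "{z. (z,x) \<in> T'} = {v}" unfolding T'_def xu using TV u uy by auto
        thus ?thesis by simp
      next
        assume xy: "x = y"
        have "{z. (z,x) \<in> T'} = {u}" unfolding T'_def xy using TV yV vV uy by auto
        thus ?thesis by simp
      qed
    qed
  next
    fix x assume x: "x \<in> V'"
    have TT: "T\<^sup>* \<subseteq> T'\<^sup>*" unfolding T'_def by (rule rtrancl_mono) blast
    have rv: "(r,v) \<in> T'\<^sup>*" using reach vV TT by blast
    have ru: "(r,u) \<in> T'\<^sup>*" using rv unfolding T'_def by (rule rtrancl_into_rtrancl) blast
    have ry: "(r,y) \<in> T'\<^sup>*" using ru unfolding T'_def by (rule rtrancl_into_rtrancl) blast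
    show "(r,x) \<in> T'\<^sup>*" using x reach TT ru ry unfolding V'_def by blast
  qed
  have LV: "tree_leaves V' T' = (tree_leaves V T - {v}) \<union> {y}"
    unfolding tree_leaves_def V'_def T'_def using TV u uy yV vV by auto
  have "tree_leaves V' T' - X' = (tree_leaves V T - X) - {v}"
    unfolding LV X'_def using yV unfolding tree_leaves_def by auto
  hence "card (tree_leaves V' T' - X') = k"
    using Suc.prems(3) v fin unfolding tree_leaves_def by simp
  then obtain V2 A2 X2 where N2: "(attach_leaf ^^ k) (V',A',X') (V2,A2,X2)" "tree_based V2 A2 X2"
    using Suc.IH[OF G' ST'] by blast
  have "(attach_leaf ^^ Suc k) (V,A,X) (V2,A2,X2)" using att N2(1) by (rule relpowp_Suc_I2)
  thus ?case using N2(2) by blast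
qed

lemma mf_inj:
  assumes inj: "inj f" and finA: "finite A"
  shows "mf (map_prod f f ` A) = mf A"
proof -
  define g where "g = map_prod f f"
  have injg: "inj g" unfolding g_def inj_def using inj by (auto dest: injD)
  have finA': "finite (g ` A)" using finA by simp
  obtain F where F: "lf A F" "card F = mf A" using mf_ex[OF finA] by blast
  have "lf (g ` A) (g ` F)"
    unfolding lf_def
  proof (intro conjI allI impI)
    show "g ` F \<subseteq> g ` A" using F(1) unfolding lf_def by blast
  next
    fix x y z assume a: "(x,y) \<in> g ` F" "(x,z) \<in> g ` F"
    then obtain a b c d where e: "(a,b) \<in> F" "(c,d) \<in> F" "x = f a" "y = f b" "x = f c" "z = f d"
      unfolding g_def by auto
    hence "a = c" using inj by (metis injD)
    hence "b = d" using e F(1) unfolding lf_def by blast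
    thus "y = z" using e by simp
  next
    fix x y z assume a: "(x,z) \<in> g ` F" "(y,z) \<in> g ` F"
    then obtain a b c d where e: "(a,b) \<in> F" "(c,d) \<in> F" "x = f a" "z = f b" "y = f c" "z = f d"
      unfolding g_def by auto
    hence "b = d" using inj by (metis injD)
    hence "a = c" using e F(1) unfolding lf_def by blast
    thus "x = y" using e by simp
  qed
  moreover have "card (g ` F) = card F" using injg by (simp add: card_image inj_on_subset)
  ultimately have 1: "mf A \<le> mf (g ` A)" using mf_le[OF finA'] F(2) by metis
  obtain F' where F': "lf (g ` A) F'" "card F' = mf (g ` A)" using mf_ex[OF finA'] by blast
  define H where "H = {e\<in>A. g e \<in> F'}"
  have gH: "g ` H = F'" using F'(1) unfolding H_def lf_def by auto
  have cH: "card H = card F'" unfolding gH[symmetric] using injg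
    by (simp add: card_image inj_on_subset)
  have "lf A H"
    unfolding lf_def
  proof (intro conjI allI impI)
    show "H \<subseteq> A" unfolding H_def by blast
  next
    fix u v w assume a: "(u,v) \<in> H" "(u,w) \<in> H"
    hence "(f u, f v) \<in> F'" "(f u, f w) \<in> F'" unfolding H_def g_def by auto
    hence "f v = f w" using F'(1) unfolding lf_def by blast
    thus "v = w" using inj by (metis injD)
  next
    fix u v w assume a: "(u,w) \<in> H" "(v,w) \<in> H"
    hence "(f u, f w) \<in> F'" "(f v, f w) \<in> F'" unfolding H_def g_def by auto
    hence "f u = f v" using F'(1) unfolding lf_def by blast
    thus "u = v" using inj by (metis injD)
  qed
  hence "mf (g ` A) \<le> mf A" using mf_le[OF finA] cH F'(2) by metis
  thus ?thesis using 1 unfolding g_def by simp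
qed

lemma G_lift:
  assumes "G V A X r"
  shows "G (Inl ` V) (map_prod Inl Inl ` A) (Inl ` X) (Inl r :: 'a + nat)"
proof -
  have fin: "finite V" and AV: "A \<subseteq> V \<times> V" and rV: "r \<in> V" and noR: "\<forall>u. (u,r) \<notin> A"
    and par: "\<forall>v\<in>V. v \<noteq> r \<longrightarrow> (\<exists>u. (u,v)\<in>A)"
    and Xd: "X = {v\<in>V. \<forall>w. (v,w) \<notin> A}"
    using assms unfolding G_def by auto
  let ?A = "map_prod Inl Inl ` A :: (('a + nat) \<times> ('a + nat)) set"
  show ?thesis
    unfolding G_def
  proof (intro conjI)
    show "finite (Inl ` V :: ('a + nat) set)" using fin by simp
    show "?A \<subseteq> Inl ` V \<times> Inl ` V" using AV by auto
    show "Inl r \<in> Inl ` V" using rV by simp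
    show "\<forall>u. (u, Inl r) \<notin> ?A" using noR by auto
    show "\<forall>v\<in>Inl ` V. v \<noteq> Inl r \<longrightarrow> (\<exists>u. (u, v) \<in> ?A)"
    proof (intro ballI impI)
      fix v :: "'a + nat" assume "v \<in> Inl ` V" "v \<noteq> Inl r"
      then obtain v0 where "v = Inl v0" "v0 \<in> V" "v0 \<noteq> r" by blast
      then obtain u where "(u,v0) \<in> A" using par by blast
      hence "(Inl u, v) \<in> ?A" using \<open>v = Inl v0\<close> by force
      thus "\<exists>u. (u, v) \<in> ?A" by blast
    qed
    show "Inl ` X = {v \<in> Inl ` V. \<forall>w. (v, w) \<notin> ?A}"
    proof
      show "Inl ` X \<subseteq> {v \<in> Inl ` V. \<forall>w. (v, w) \<notin> ?A}" using Xd by auto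
      show "{v \<in> Inl ` V. \<forall>w. (v, w) \<notin> ?A} \<subseteq> Inl ` X"
      proof
        fix v assume v: "v \<in> {v \<in> Inl ` V. \<forall>w. (v, w) \<notin> ?A}"
        then obtain v0 where v0: "v = Inl v0" "v0 \<in> V" by blast
        have "\<forall>w. (v0, w) \<notin> A"
        proof (intro allI notI)
          fix w assume "(v0,w) \<in> A"
          hence "(v, Inl w) \<in> ?A" using v0 by force
          thus False using v by blast
        qed
        thus "v \<in> Inl ` X" using v0 Xd by blast
      qed
    qed
  qed
qed

lemma phylo_G:
  assumes "phylo_network V A X"
  shows "\<exists>r. G V A X r \<and> acyclic A"
proof -
  have fin: "finite V" and AV: "A \<subseteq> V \<times> V" and acyc: "acyclic A"
    using assms unfolding phylo_network_def by auto
  have finA: "finite A" using finite_subset[OF AV] fin by simp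
  have finin: "finite {u. (u,v) \<in> A}" for v
  proof -
    have "{u. (u,v) \<in> A} \<subseteq> fst ` A" by force
    thus ?thesis using finA finite_subset by blast
  qed
  have finout: "finite {w. (v,w) \<in> A}" for v
  proof -
    have "{w. (v,w) \<in> A} \<subseteq> snd ` A" by force
    thus ?thesis using finA finite_subset by blast
  qed
  from assms consider (single) r where "V = {r}" "A = {}" "X = {r}"
    | (net) r where "r \<in> V" "indeg A r = 0" "\<forall>v\<in>V. v \<noteq> r \<longrightarrow> indeg A v \<ge> 1"
        "X = {v\<in>V. outdeg A v = 0}"
    unfolding phylo_network_def by blast
  thus ?thesis
  proof cases
    case single
    hence "G V A X r" unfolding G_def by auto
    thus ?thesis using acyc by blast
  next
    case net
    have "G V A X r"
      unfolding G_def
    proof (intro conjI)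
      show "finite V" "A \<subseteq> V \<times> V" "r \<in> V" by fact+
      show "\<forall>u. (u, r) \<notin> A" using net(2) finin[of r] unfolding indeg_def by simp
      show "\<forall>v\<in>V. v \<noteq> r \<longrightarrow> (\<exists>u. (u, v) \<in> A)"
      proof (intro ballI impI)
        fix v assume "v \<in> V" "v \<noteq> r"
        hence "card {u. (u,v) \<in> A} \<noteq> 0" using net(3) unfolding indeg_def by force
        thus "\<exists>u. (u, v) \<in> A" by (metis (no_types, lifting) card.empty empty_Collect_eq)
      qed
      have "outdeg A v = 0 \<longleftrightarrow> (\<forall>w. (v,w) \<notin> A)" for v
        using finout[of v] unfolding outdeg_def by simp
      thus "X = {v \<in> V. \<forall>w. (v, w) \<notin> A}" using net(4) by simp
    qed
    thus ?thesis using acyc by blast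
  qed
qed

lemma t_num_eq:
  assumes GV: "G V A X r" and acyc: "acyclic A"
  shows "int (t_num V A X) = int (card V) - int (card X) - int (mf A)"
proof -
  have fin: "finite V" and AV: "A \<subseteq> V \<times> V" and XV: "X \<subseteq> V"
    using GV unfolding G_def by auto
  have finA: "finite A" using finite_subset[OF AV] fin by simp
  define V0 where "V0 = (Inl ` V :: ('a + nat) set)"
  define A0 where "A0 = (map_prod Inl Inl ` A :: (('a + nat) \<times> ('a + nat)) set)"
  define X0 where "X0 = (Inl ` X :: ('a + nat) set)"
  have N0: "lift_net V A X = (V0, A0, X0)" unfolding lift_net_def V0_def A0_def X0_def by simp
  have G0: "G V0 A0 X0 (Inl r)" unfolding V0_def A0_def X0_def by (rule G_lift[OF GV])
  have acyc0: "acyclic A0"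
    unfolding A0_def
    by (rule wf_acyclic, rule wf_map_prod_image) (use finA acyc finite_acyclic_wf in auto)
  have cV: "card V0 = card V" unfolding V0_def by (simp add: card_image)
  have cX: "card X0 = card X" unfolding X0_def by (simp add: card_image)
  have mA: "mf A0 = mf A" unfolding A0_def by (rule mf_inj) (auto simp: finA)
  have f0: "fval (V0,A0,X0) = int (card V) - int (card X) - int (mf A)"
    unfolding fval_def using cV cX mA by simp
  have J0: "J V0 A0 X0" using fin AV XV unfolding J_def V0_def A0_def X0_def by auto
  define P where "P k = (\<exists>V' A' X'. (attach_leaf ^^ k) (lift_net V A X) (V',A',X') \<and> tree_based V' A' X')" for k
  have tdef: "t_num V A X = (LEAST k. P k)" unfolding t_num_def P_def by simp
  obtain T0 where T0: "spanning_tree V0 A0 (Inl r) T0"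
    "card (tree_leaves V0 T0 - X0) + card X0 + mf A0 \<le> card V0"
    using L2[OF G0 acyc0] by blast
  have inf: "infinite (UNIV :: ('a + nat) set)" by simp
  have Pc: "P (card (tree_leaves V0 T0 - X0))"
    unfolding P_def N0 using upper[OF inf G0 T0(1) refl] .
  have lo: "fval (V0,A0,X0) \<le> int k" if "P k" for k
  proof -
    obtain V' A' X' where a: "(attach_leaf ^^ k) (V0,A0,X0) (V',A',X')" "tree_based V' A' X'"
      using \<open>P k\<close> unfolding P_def N0 by blast
    have b: "J V' A' X' \<and> fval (V0,A0,X0) \<le> fval (V',A',X') + int k"
      using attach_pow[OF a(1)] J0 by simp
    have "card V' \<le> card X' + mf A'" using tb_bound[OF _ a(2)] b by blast
    hence "fval (V',A',X') \<le> 0" unfolding fval_def by simp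
    thus ?thesis using b by linarith
  qed
  have "P (LEAST k. P k)" using Pc by (rule LeastI)
  hence 1: "fval (V0,A0,X0) \<le> int (t_num V A X)" using lo tdef by simp
  have "t_num V A X \<le> card (tree_leaves V0 T0 - X0)" unfolding tdef using Pc by (rule Least_le)
  hence "int (t_num V A X) \<le> fval (V0,A0,X0)" using T0(2) unfolding fval_def by simp
  thus ?thesis using 1 f0 by linarith
qed

theorem theorem5:
  fixes V :: "'a set" and A :: "('a \<times> 'a) set" and X :: "'a set"
  assumes "phylo_network V A X"
  shows "int (l_num V A X) = p_num V A X \<and>
         p_num V A X = int (t_num V A X) \<and>
         int (t_num V A X) = (int (card V) - int (card X)) - int (max_matching_size (bip_edges A))"
proof -
  obtain r where GV: "G V A X r" and acyc: "acyclic A" using phylo_G[OF assms] by blast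
  have fin: "finite V" and AV: "A \<subseteq> V \<times> V" using GV unfolding G_def by auto
  have finA: "finite A" using finite_subset[OF AV] fin by simp
  have l: "l_num V A X + card X + mf A = card V" using l_num_eq[OF GV acyc] .
  have d: "d_num V A + mf A = card V" using d_num_eq[OF fin AV acyc] .
  have m: "max_matching_size (bip_edges A) = mf A" using mms_eq[OF finA] .
  have t: "int (t_num V A X) = int (card V) - int (card X) - int (mf A)" using t_num_eq[OF GV acyc] .
  have p: "p_num V A X = int (d_num V A) - int (card X)" unfolding p_num_def ..
  show ?thesis using l d m t p by linarith
qed

end
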